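(* When Algorithm A (described below) is applied to a sequence $\epsilon$, producing $\epsilon'$, there is no position $i$ that is a transient occurrence of $q$.
   Context: The reduction of an integer word replaces each occurrence of its $k$-th smallest distinct value by $k-1$; a consecutive pattern $\underline{p_1p_2p_3p_4}$ occurs in a sequence at position $i$ if the reduction of its entries in positions $i,\dots,i+3$ equals $p_1p_2p_3p_4$. Let $p=\underline{0102}$ and $q=\underline{0112}$. Algorithm A, on input an integer sequence $\mathrm{seq}=\epsilon_1\cdots\epsilon_n$: let $E_p$, $E_q$ be the sets of positions of occurrences of $p$, resp. $q$, in the input sequence; set $\mathrm{last}:=$ null. For $i=1,2,\dots,n$ in order: let $N_p,N_q$ be the sets of positions of occurrences of $p$, resp. $q$, in the current sequence. If $i-2\in E_p$: set $\mathrm{last}:=\mathrm{seq}[i]$ and $\mathrm{seq}[i]:=\mathrm{seq}[i-1]$. Else if $i-2\in E_q$: set $\mathrm{last}:=\mathrm{seq}[i]$ and $\mathrm{seq}[i]:=\mathrm{seq}[i-2]$. Else if $i-2\in N_p$ or $i-2\in N_q$: swap the values of $\mathrm{seq}[i]$ and $\mathrm{last}$. Output $\mathrm{seq}$. With $\epsilon$ the input and $\epsilon'$ the output: position $i$ is an original occurrence of $q$ if $\epsilon_i<\epsilon_{i+1}=\epsilon_{i+2}<\epsilon_{i+3}$; it is a transient occurrence of $q$ if it is not an original occurrence of $q$ but $\epsilon'_i<\epsilon_{i+1}=\epsilon_{i+2}<\epsilon_{i+3}$. *)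

theory Defs
  imports Main
begin

text \<open>Sequences are lists of integers; positions are 1-based as in the paper:
  position j of w is w ! (j - 1).\<close>

definition red :: "int list \<Rightarrow> nat list" where
  "red w = map (\<lambda>x. card {y \<in> set w. y < x}) w"

definition occ :: "nat list \<Rightarrow> int list \<Rightarrow> nat \<Rightarrow> bool" where
  "occ pat w i \<longleftrightarrow> 1 \<le> i \<and> i + 3 \<le> length w \<and> red (take 4 (drop (i - 1) w)) = pat"

definition patP :: "nat list" where "patP = [0,1,0,2]"
definition patQ :: "nat list" where "patQ = [0,1,1,2]"

text \<open>One iteration (index i, 1-based) of Algorithm A. The state is the current
  sequence together with the variable last (None = null). Ep, Eq are the
  occurrence sets of p, q in the input.\<close>
definition stepA :: "nat set \<Rightarrow> nat set \<Rightarrow> nat \<Rightarrow> int list \<times> int option \<Rightarrow> int list \<times> int option" where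
  "stepA Ep Eq i st = (let s = fst st; last = snd st in
     if 3 \<le> i \<and> i - 2 \<in> Ep then (s[i - 1 := s ! (i - 2)], Some (s ! (i - 1)))
     else if 3 \<le> i \<and> i - 2 \<in> Eq then (s[i - 1 := s ! (i - 3)], Some (s ! (i - 1)))
     else if 3 \<le> i \<and> (occ patP s (i - 2) \<or> occ patQ s (i - 2)) then
       (case last of Some v \<Rightarrow> (s[i - 1 := v], Some (s ! (i - 1))) | None \<Rightarrow> (s, last))
     else (s, last))"

definition algA :: "int list \<Rightarrow> int list" where
  "algA eps = fst (fold (stepA {j. occ patP eps j} {j. occ patQ eps j})
                        [1..<length eps + 1] (eps, None))"

definition orig_occ_q :: "int list \<Rightarrow> nat \<Rightarrow> bool" where
  "orig_occ_q eps i \<longleftrightarrow> 1 \<le> i \<and> i + 3 \<le> length eps \<and>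
     eps ! (i - 1) < eps ! i \<and> eps ! i = eps ! (i + 1) \<and> eps ! (i + 1) < eps ! (i + 2)"

definition transient_occ_q :: "int list \<Rightarrow> int list \<Rightarrow> nat \<Rightarrow> bool" where
  "transient_occ_q eps eps' i \<longleftrightarrow> 1 \<le> i \<and> i + 3 \<le> length eps \<and>
     \<not> orig_occ_q eps i \<and>
     eps' ! (i - 1) < eps ! i \<and> eps ! i = eps ! (i + 1) \<and> eps ! (i + 1) < eps ! (i + 2)"

end

theory Submission
  imports Defs
begin

lemma red_le:
  assumes "a < length w" "b < length w" "w ! a \<le> w ! b"
  shows "red w ! a \<le> red w ! b"
proof -
  have "{y \<in> set w. y < w ! a} \<subseteq> {y \<in> set w. y < w ! b}" using assms by auto
  then have "card {y \<in> set w. y < w ! a} \<le> card {y \<in> set w. y < w ! b}"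
    by (intro card_mono) auto
  then show ?thesis using assms by (simp add: red_def)
qed

lemma occ_lt:
  assumes "occ pat w j" "pat ! 2 < pat ! 3"
  shows "w ! (j + 1) < w ! (j + 2)" "j + 2 < length w"
proof -
  let ?v = "take 4 (drop (j - 1) w)"
  have j: "1 \<le> j" "j + 3 \<le> length w" and r: "red ?v = pat" using assms by (auto simp: occ_def)
  have len: "length ?v = 4" using j by simp
  have "\<not> ?v ! 3 \<le> ?v ! 2"
  proof
    assume "?v ! 3 \<le> ?v ! 2"
    from red_le[of 3 ?v 2, OF _ _ this] len have "red ?v ! 3 \<le> red ?v ! 2" by simp
    with r assms(2) show False by simp
  qed
  moreover have "?v ! 2 = w ! (j + 1)" "?v ! 3 = w ! (j + 2)" using j
    by (simp_all add: nth_drop)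
  ultimately show "w ! (j + 1) < w ! (j + 2)" by simp
  show "j + 2 < length w" using j by simp
qed

definition inv :: "int list \<Rightarrow> nat \<Rightarrow> int list \<Rightarrow> bool" where
  "inv eps k s \<longleftrightarrow> length s = length eps \<and> (\<forall>m<length eps. k \<le> m \<longrightarrow> s ! m = eps ! m) \<and>
     (\<forall>m<length eps. m < k \<longrightarrow> s ! m = eps ! m \<or> (m + 1 < length eps \<and> eps ! m < eps ! (m + 1)))"

lemma inv_step:
  assumes "inv eps k (fst st)"
  shows "inv eps (Suc k) (fst (stepA {j. occ patP eps j} {j. occ patQ eps j} (Suc k) st))"
proof -
  let ?s = "fst st"
  have P: "patP ! 2 < patP ! 3" and Q: "patQ ! 2 < patQ ! 3" by (simp_all add: patP_def patQ_def)
  have good: "inv eps (Suc k) (?s[k := v])" if "k < length eps \<longrightarrow> k + 1 < length eps \<and> eps ! k < eps ! (k + 1)" for v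
    using assms that by (auto simp: inv_def nth_list_update less_Suc_eq)
  have same: "inv eps (Suc k) ?s" using assms by (auto simp: inv_def less_Suc_eq)
  show ?thesis
  proof (cases "3 \<le> Suc k \<and> Suc k - 2 \<in> {j. occ patP eps j}")
    case True
    then have "occ patP eps (k - 1)" by simp
    from occ_lt[OF this P] True have "eps ! k < eps ! (k + 1)" "k + 1 < length eps" by auto
    with True show ?thesis unfolding stepA_def Let_def using good by simp
  next
    case F1: False
    show ?thesis
    proof (cases "3 \<le> Suc k \<and> Suc k - 2 \<in> {j. occ patQ eps j}")
      case True
      then have "occ patQ eps (k - 1)" by simp
      from occ_lt[OF this Q] True have "eps ! k < eps ! (k + 1)" "k + 1 < length eps" by auto
      with F1 True show ?thesis unfolding stepA_def Let_def using good by simp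
    next
      case F2: False
      show ?thesis
      proof (cases "3 \<le> Suc k \<and> (occ patP ?s (Suc k - 2) \<or> occ patQ ?s (Suc k - 2))")
        case True
        then have "?s ! k < ?s ! (k + 1) \<and> k + 1 < length ?s"
          using occ_lt[OF _ P, of ?s "k - 1"] occ_lt[OF _ Q, of ?s "k - 1"] by auto
        moreover have "length ?s = length eps" using assms by (simp add: inv_def)
        ultimately have "eps ! k < eps ! (k + 1) \<and> k + 1 < length eps"
          using assms unfolding inv_def by auto
        then show ?thesis using F1 F2 True good same
          unfolding stepA_def Let_def by (auto split: option.split)
      next
        case False
        then show ?thesis using F1 F2 same unfolding stepA_def Let_def by auto
      qed
    qed
  qed
qed

lemma inv_fold:
  "inv eps k (fst (fold (stepA {j. occ patP eps j} {j. occ patQ eps j}) [1..<k + 1] (eps, None)))"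
proof (induction k)
  case 0
  then show ?case by (simp add: inv_def)
next
  case (Suc k)
  have "[1..<Suc k + 1] = [1..<k + 1] @ [Suc k]" by simp
  then show ?case using inv_step[OF Suc] by simp
qed

theorem corollary1:
  fixes eps :: "int list"
  shows "\<not> (\<exists>i. transient_occ_q eps (algA eps) i)"
proof
  assume "\<exists>i. transient_occ_q eps (algA eps) i"
  then obtain i where t: "transient_occ_q eps (algA eps) i" by blast
  have I: "inv eps (length eps) (algA eps)" using inv_fold[of eps "length eps"] by (simp add: algA_def)
  from t have i: "1 \<le> i" "i + 3 \<le> length eps" by (auto simp: transient_occ_q_def)
  with I have "algA eps ! (i - 1) = eps ! (i - 1) \<or> eps ! (i - 1) < eps ! (i - 1 + 1)"
    unfolding inv_def by (metis add_lessD1 diff_less less_le_trans nat_less_le not_one_le_zero zero_less_one le_add1 Suc_le_eq)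
  then show False using t i by (auto simp: transient_occ_q_def orig_occ_q_def)
qed

end
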